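(* Let $(X,d)$ be a compact metric space and let $f_1,f_2:X\to X$ be continuous. Suppose there is $c\in X$ with $f_1(x)=c$ for all $x\in X$, $f_2(c)=c$, and $f_2$ is sensitive. Then the multiple mapping $F=\{f_1,f_2\}$ is (Hausdorff metric) sensitive.
   Context: For the multiple mapping $F=\{f_1,f_2\}$ and $n\ge 1$, $F^n(x)=\{f_{i_1}f_{i_2}\cdots f_{i_n}(x)\mid i_1,\dots,i_n\in\{1,2\}\}$, a nonempty compact subset of $X$. The Hausdorff metric on nonempty compact subsets is $d_H(A,B)=\max\{\sup_{a\in A}\inf_{b\in B}d(a,b),\sup_{b\in B}\inf_{a\in A}d(a,b)\}$. $F$ is (Hausdorff metric) sensitive if there is $\delta>0$ such that for every nonempty open $U\subset X$ there exist $x,y\in U$ and $n\in\mathbb{Z}^+$ with $d_H(F^n(x),F^n(y))>\delta$. A continuous map $f:X\to X$ is sensitive if there is $\delta>0$ such that for every nonempty open $U\subset X$ there exist $x,y\in U$ and $n\in\mathbb{Z}^+$ with $d(f^n(x),f^n(y))>\delta$. Here $\mathbb{Z}^+=\{1,2,3,\dots\}$. *)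

theory Defs
  imports "HOL-Analysis.Analysis"
begin

definition hausdorff_dist :: "'a::metric_space set \<Rightarrow> 'a set \<Rightarrow> real" where
  "hausdorff_dist A B =
     max (SUP a\<in>A. INF b\<in>B. dist a b) (SUP b\<in>B. INF a\<in>A. dist a b)"

definition comp_word :: "(nat \<Rightarrow> 'a \<Rightarrow> 'a) \<Rightarrow> nat list \<Rightarrow> 'a \<Rightarrow> 'a" where
  "comp_word f is = foldr (\<lambda>i g. f i \<circ> g) is id"

text \<open>F^n(x) for the multiple mapping F = {f 1, f 2}.\<close>
definition multi_iter :: "(nat \<Rightarrow> 'a \<Rightarrow> 'a) \<Rightarrow> nat \<Rightarrow> 'a \<Rightarrow> 'a set" where
  "multi_iter f n x = {comp_word f is x | is. length is = n \<and> set is \<subseteq> {1, 2}}"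

definition sensitive_map :: "'a::metric_space set \<Rightarrow> ('a \<Rightarrow> 'a) \<Rightarrow> bool" where
  "sensitive_map X g \<longleftrightarrow> (\<exists>\<delta>>0. \<forall>U. openin (top_of_set X) U \<and> U \<noteq> {} \<longrightarrow>
      (\<exists>x\<in>U. \<exists>y\<in>U. \<exists>n\<ge>1. dist ((g ^^ n) x) ((g ^^ n) y) > \<delta>))"

definition hausdorff_sensitive :: "'a::metric_space set \<Rightarrow> (nat \<Rightarrow> 'a \<Rightarrow> 'a) \<Rightarrow> bool" where
  "hausdorff_sensitive X f \<longleftrightarrow> (\<exists>\<delta>>0. \<forall>U. openin (top_of_set X) U \<and> U \<noteq> {} \<longrightarrow>
      (\<exists>x\<in>U. \<exists>y\<in>U. \<exists>n\<ge>1. hausdorff_dist (multi_iter f n x) (multi_iter f n y) > \<delta>))"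

end

theory Submission
  imports Defs
begin

lemma hd2: fixes a b c :: "'a::metric_space"
  shows "hausdorff_dist {a,c} {b,c} = max (min (dist a b) (dist a c)) (min (dist a b) (dist b c))"
  unfolding hausdorff_dist_def by (simp add: cSup_insert cInf_insert dist_commute inf_real_def sup_real_def)

lemma cw_Cons: "comp_word f (i # is) x = f i (comp_word f is x)"
  by (simp add: comp_word_def)

lemma cw_main:
  fixes f1 f2 :: "'a \<Rightarrow> 'a"
  assumes "f1 ` X \<subseteq> X" "f2 ` X \<subseteq> X" "c \<in> X" "\<forall>x\<in>X. f1 x = c" "f2 c = c" "x \<in> X"
  shows "set is \<subseteq> {1,2} \<Longrightarrow> comp_word (\<lambda>i. if i = 1 then f1 else f2) is x \<in> X \<and>
     comp_word (\<lambda>i. if i = 1 then f1 else f2) is x = (if set is \<subseteq> {2} then (f2 ^^ length is) x else c)"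
proof (induction "is")
  case Nil
  then show ?case using assms by (simp add: comp_word_def)
next
  case (Cons i "is")
  have s: "set is \<subseteq> {1,2}" using Cons.prems by simp
  have IH: "comp_word (\<lambda>i. if i = 1 then f1 else f2) is x \<in> X"
    "comp_word (\<lambda>i. if i = 1 then f1 else f2) is x = (if set is \<subseteq> {2} then (f2 ^^ length is) x else c)"
    using Cons.IH[OF s] by blast+
  show ?case
  proof (cases "i = 1")
    case True
    then show ?thesis using IH assms by (simp add: cw_Cons)
  next
    case False
    then have "i = 2" using Cons.prems by auto
    then show ?thesis using IH assms by (auto simp add: cw_Cons image_subset_iff)
  qed
qed

lemma mi:
  fixes f1 f2 :: "'a \<Rightarrow> 'a"
  assumes "f1 ` X \<subseteq> X" "f2 ` X \<subseteq> X" "c \<in> X" "\<forall>x\<in>X. f1 x = c" "f2 c = c" "x \<in> X" "n \<ge> 1"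
  shows "multi_iter (\<lambda>i. if i = 1 then f1 else f2) n x = {(f2 ^^ n) x, c}"
proof
  show "multi_iter (\<lambda>i. if i = 1 then f1 else f2) n x \<subseteq> {(f2 ^^ n) x, c}"
    using cw_main[OF assms(1-6)] unfolding multi_iter_def by auto
next
  have r1: "set (replicate n (2::nat)) \<subseteq> {1,2}" "set (replicate n (2::nat)) \<subseteq> {2}" by auto
  have "comp_word (\<lambda>i. if i = 1 then f1 else f2) (replicate n 2) x = (f2 ^^ n) x"
    using cw_main[OF assms(1-6) r1(1)] r1(2) by simp
  then have a: "(f2 ^^ n) x \<in> multi_iter (\<lambda>i. if i = 1 then f1 else f2) n x"
    unfolding multi_iter_def using r1(1)
    by (intro CollectI exI[of _ "replicate n 2"]) auto
  define w :: "nat list" where "w = 1 # replicate (n-1) 2"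
  have w1: "set w \<subseteq> {1,2}" unfolding w_def by auto
  have w2: "\<not> set w \<subseteq> {2}" unfolding w_def by auto
  have w3: "length w = n" unfolding w_def using assms(7) by auto
  have "comp_word (\<lambda>i. if i = 1 then f1 else f2) w x = c"
    using cw_main[OF assms(1-6) w1] w2 by simp
  then have b: "c \<in> multi_iter (\<lambda>i. if i = 1 then f1 else f2) n x"
    unfolding multi_iter_def using w1 w3
    by (intro CollectI exI[of _ w]) auto
  show "{(f2 ^^ n) x, c} \<subseteq> multi_iter (\<lambda>i. if i = 1 then f1 else f2) n x" using a b by auto
qed

theorem theorem3p3:
  fixes X :: "'a::metric_space set" and f1 f2 :: "'a \<Rightarrow> 'a" and c :: 'a
  assumes "compact X"
    and "continuous_on X f1" and "f1 ` X \<subseteq> X"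
    and "continuous_on X f2" and "f2 ` X \<subseteq> X"
    and "c \<in> X" and "\<forall>x\<in>X. f1 x = c" and "f2 c = c"
    and "sensitive_map X f2"
  shows "hausdorff_sensitive X (\<lambda>i. if i = 1 then f1 else f2)"
proof -
  obtain d where d: "d > 0" and H: "\<forall>U. openin (top_of_set X) U \<and> U \<noteq> {} \<longrightarrow>
      (\<exists>x\<in>U. \<exists>y\<in>U. \<exists>n\<ge>1. dist ((f2 ^^ n) x) ((f2 ^^ n) y) > d)"
    using assms(9) unfolding sensitive_map_def by (elim exE conjE) blast
  show ?thesis unfolding hausdorff_sensitive_def
  proof (intro exI[of _ "d/2"] conjI allI impI)
    show "d/2 > 0" using d by simp
    fix U assume U: "openin (top_of_set X) U \<and> U \<noteq> {}"
    then obtain x y n where xy: "x \<in> U" "y \<in> U" "n \<ge> 1" and dd: "dist ((f2 ^^ n) x) ((f2 ^^ n) y) > d"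
      using H U by meson
    have "U \<subseteq> X" using U openin_imp_subset by force
    then have xX: "x \<in> X" "y \<in> X" using xy by auto
    define a where "a = (f2 ^^ n) x"
    define b where "b = (f2 ^^ n) y"
    have "dist a b \<le> dist a c + dist c b" by (rule dist_triangle)
    moreover have "dist a b > d" using dd unfolding a_def b_def .
    moreover have "dist c b = dist b c" by (rule dist_commute)
    ultimately have "hausdorff_dist {a,c} {b,c} > d/2" unfolding hd2
      using d by (auto simp: max_def min_def)
    then have "hausdorff_dist (multi_iter (\<lambda>i. if i = 1 then f1 else f2) n x)
       (multi_iter (\<lambda>i. if i = 1 then f1 else f2) n y) > d/2"
      using mi[OF assms(3,5,6,7,8) xX(1) xy(3)] mi[OF assms(3,5,6,7,8) xX(2) xy(3)]
      unfolding a_def b_def by simp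
    then show "\<exists>x\<in>U. \<exists>y\<in>U. \<exists>n\<ge>1. hausdorff_dist (multi_iter (\<lambda>i. if i = 1 then f1 else f2) n x)
       (multi_iter (\<lambda>i. if i = 1 then f1 else f2) n y) > d/2"
      using xy by blast
  qed
qed

end
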